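(* Let $(F,t)\in U$, $Y=Y_{F,t}$, and $p_1,p_2\in C_i$ ($i\in\{1,2\}$). Let $l_{p_1p_2}$ be the residual line of $\overline{p_0p_1}+\overline{p_0p_2}$, i.e. the line with $Y\cap P=\overline{p_0p_1}+\overline{p_0p_2}+l_{p_1p_2}$, where $P$ is the plane spanned by $p_0,p_1,p_2$ (when $p_1=p_2$, $P$ is the tangent plane of the cone $\hat C_i$ along $\overline{p_0p_1}$). Then $l_{p_1p_2}=\overline{p_0p_3}$, where $p_3$ is the third intersection point of the line $\overline{p_1p_2}$ with $C_i$. In particular $l_{p_1p_2}\in\Gamma_i$.
   Context: $U=U_0\times\mathbb{A}^1$, where $U_0$ is the space of cubic forms $F(x_0,\dots,x_3)$ such that the curve cut out by $F$ on the quadric $x_0x_3=x_1x_2$ in $\mathbb{P}^3$ is smooth, avoids $[0,0,0,1]$, and is tangent with multiplicity $2$ to the lines $x_0=x_1=0$ and $x_0=x_2=0$. $Y_{F,t}\subset\mathbb{P}^5$ is $x_4^3-F(x_0,\dots,x_3)+x_5(x_0x_3-x_1x_2)+t\,x_0x_5^2=0$. $p_0=[0,\dots,0,1]$. $C_i=(x_0=x_i=x_5=0)\cap(x_4^3=F)$ is a plane cubic, $\hat C_i\subset Y$ the cone over $C_i$ with vertex $p_0$, and $\Gamma_i\subset F(Y)$ the image of $C_i\to F(Y)$, $p\mapsto\overline{p_0p}$. *)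

theory Defs
  imports "HOL-Analysis.Analysis"
begin

text \<open>Homogeneous coordinates: a point of P^5 is represented by a nonzero vector
  x :: complex^6 with coordinates x$0,...,x$5. Cubic forms in x0..x3 are functions
  of four complex arguments given by a homogeneous cubic polynomial.\<close>

type_synonym cform4 = "complex \<Rightarrow> complex \<Rightarrow> complex \<Rightarrow> complex \<Rightarrow> complex"

definition cubic_form4 :: "cform4 \<Rightarrow> bool" where
  "cubic_form4 F \<longleftrightarrow> (\<exists>c :: nat \<Rightarrow> nat \<Rightarrow> nat \<Rightarrow> complex. \<forall>x0 x1 x2 x3.
     F x0 x1 x2 x3 = (\<Sum>i<4. \<Sum>j<4. \<Sum>k<4.
        c i j k * [x0,x1,x2,x3] ! i * [x0,x1,x2,x3] ! j * [x0,x1,x2,x3] ! k))"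

definition quadQ :: cform4 where
  "quadQ x0 x1 x2 x3 = x0 * x3 - x1 * x2"

definition grad4 :: "cform4 \<Rightarrow> complex \<Rightarrow> complex \<Rightarrow> complex \<Rightarrow> complex \<Rightarrow> complex list" where
  "grad4 G x0 x1 x2 x3 =
     [deriv (\<lambda>s. G s x1 x2 x3) x0, deriv (\<lambda>s. G x0 s x2 x3) x1,
      deriv (\<lambda>s. G x0 x1 s x3) x2, deriv (\<lambda>s. G x0 x1 x2 s) x3]"

text \<open>The curve F = 0 on the quadric is smooth: at every point of it the Jacobian of
  (quadQ, F) has rank 2.\<close>
definition smooth_on_quadric :: "cform4 \<Rightarrow> bool" where
  "smooth_on_quadric F \<longleftrightarrow> (\<forall>x0 x1 x2 x3. (x0,x1,x2,x3) \<noteq> (0,0,0,0) \<and>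
      F x0 x1 x2 x3 = 0 \<and> quadQ x0 x1 x2 x3 = 0 \<longrightarrow>
      \<not> (\<exists>l m. (l,m) \<noteq> (0,0) \<and> (\<forall>k<4.
          l * grad4 F x0 x1 x2 x3 ! k + m * grad4 quadQ x0 x1 x2 x3 ! k = 0)))"

text \<open>A binary cubic f(u,v) (restriction of F to a line on the quadric) defines the
  divisor 2p + q with p \<noteq> q: the curve is tangent to the line with multiplicity 2.\<close>
definition tangent_mult2 :: "(complex \<Rightarrow> complex \<Rightarrow> complex) \<Rightarrow> bool" where
  "tangent_mult2 f \<longleftrightarrow> (\<exists>a b c d. a * d - b * c \<noteq> 0 \<and>
      (\<forall>u v. f u v = (a * u + b * v)^2 * (c * u + d * v)))"

definition U0 :: "cform4 \<Rightarrow> bool" where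
  "U0 F \<longleftrightarrow> cubic_form4 F \<and> smooth_on_quadric F \<and> F 0 0 0 1 \<noteq> 0 \<and>
     tangent_mult2 (\<lambda>u v. F 0 0 u v) \<and> tangent_mult2 (\<lambda>u v. F 0 u 0 v)"

definition Gform :: "cform4 \<Rightarrow> complex \<Rightarrow> complex^6 \<Rightarrow> complex" where
  "Gform F t x = (x$4)^3 - F (x$0) (x$1) (x$2) (x$3)
      + x$5 * (x$0 * x$3 - x$1 * x$2) + t * x$0 * (x$5)^2"

definition p0 :: "complex^6" where
  "p0 = (\<chi> j. if j = 5 then 1 else 0)"

definition in_Pi :: "nat \<Rightarrow> complex^6 \<Rightarrow> bool" where
  "in_Pi i x \<longleftrightarrow> x$0 = 0 \<and> x$5 = 0 \<and> (if i = 1 then x$1 = 0 else x$2 = 0)"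

definition Cpt :: "cform4 \<Rightarrow> nat \<Rightarrow> complex^6 \<Rightarrow> bool" where
  "Cpt F i x \<longleftrightarrow> x \<noteq> 0 \<and> in_Pi i x \<and> (x$4)^3 = F (x$0) (x$1) (x$2) (x$3)"

definition proportional :: "complex^6 \<Rightarrow> complex^6 \<Rightarrow> bool" where
  "proportional u v \<longleftrightarrow> (\<exists>c. v = c *s u)"

definition line_through :: "complex^6 \<Rightarrow> complex^6 \<Rightarrow> (complex^6) set" where
  "line_through u v = {a *s u + b *s v | a b. True}"

definition Gamma :: "cform4 \<Rightarrow> nat \<Rightarrow> (complex^6) set set" where
  "Gamma F i = {line_through p0 p | p. Cpt F i p}"

definition plane_pt :: "complex^6 \<Rightarrow> complex^6 \<Rightarrow> complex \<Rightarrow> complex \<Rightarrow> complex \<Rightarrow> complex^6" where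
  "plane_pt p q a b c = a *s p + b *s q + c *s p0"

text \<open>L is the residual line in the plane spanned by p0, p, q: restricted to that plane,
  the cubic equation of Y factors as D(a,b,c) times a nonzero linear form M, where D is the
  product of the equations of the given lines, and L is the zero set of M.\<close>
definition residual_line :: "cform4 \<Rightarrow> complex \<Rightarrow> complex^6 \<Rightarrow> complex^6
    \<Rightarrow> (complex \<Rightarrow> complex \<Rightarrow> complex \<Rightarrow> complex) \<Rightarrow> (complex^6) set \<Rightarrow> bool" where
  "residual_line F t p q D L \<longleftrightarrow> (\<exists>m1 m2 m3. (m1,m2,m3) \<noteq> (0,0,0) \<and>
     (\<forall>a b c. Gform F t (plane_pt p q a b c) = D a b c * (m1 * a + m2 * b + m3 * c)) \<and>
     L = {plane_pt p q a b c | a b c. m1 * a + m2 * b + m3 * c = 0})"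

text \<open>r is the residual (third) intersection point of the line through p, q (in the plane
  Pi_i) with C_i, given that the restriction of the cubic x4^3 - F to the line contains the
  known part D2(a,b) of the intersection divisor.\<close>
definition third_point :: "cform4 \<Rightarrow> complex^6 \<Rightarrow> complex^6
    \<Rightarrow> (complex \<Rightarrow> complex \<Rightarrow> complex) \<Rightarrow> complex^6 \<Rightarrow> bool" where
  "third_point F p q D2 r \<longleftrightarrow> (\<exists>\<alpha> \<beta> \<kappa>. (\<alpha>,\<beta>) \<noteq> (0,0) \<and> \<kappa> \<noteq> 0 \<and> r = \<alpha> *s p + \<beta> *s q \<and>
     (\<forall>a b. let x = a *s p + b *s q in
        (x$4)^3 - F (x$0) (x$1) (x$2) (x$3) = \<kappa> * D2 a b * (\<beta> * a - \<alpha> * b)))"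

text \<open>w gives a tangent direction to C_i at p: w lies in Pi_i, is independent of p, and
  the line through p and w meets C_i at p with multiplicity at least 2.\<close>
definition tangent_dir :: "cform4 \<Rightarrow> nat \<Rightarrow> complex^6 \<Rightarrow> complex^6 \<Rightarrow> bool" where
  "tangent_dir F i p w \<longleftrightarrow> in_Pi i w \<and> \<not> proportional p w \<and> w \<noteq> 0 \<and>
     (\<exists>c1 c2. \<forall>a b. let x = a *s p + b *s w in
        (x$4)^3 - F (x$0) (x$1) (x$2) (x$3) = b^2 * (c1 * a + c2 * b))"

end

theory Submission
  imports Defs
begin
lemma exhaust_6:
  fixes x :: 6
  shows "x = 0 \<or> x = 1 \<or> x = 2 \<or> x = 3 \<or> x = 4 \<or> x = 5"
proof (induct x)
  case (of_int z)
  then have "z = 0 \<or> z = 1 \<or> z = 2 \<or> z = 3 \<or> z = 4 \<or> z = 5" by fastforce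
  then show ?case by auto
qed

definition bcub :: "(complex \<Rightarrow> complex \<Rightarrow> complex) \<Rightarrow> bool" where
  "bcub f \<longleftrightarrow> (\<exists>A B C D. \<forall>a b. f a b = A*a^3 + B*a^2*b + C*a*b^2 + D*b^3)"

lemma bcub_add: "bcub f \<Longrightarrow> bcub g \<Longrightarrow> bcub (\<lambda>a b. f a b + g a b)"
proof -
  assume "bcub f" "bcub g"
  then obtain A B C D A' B' C' D' where
    "\<forall>a b. f a b = A*a^3 + B*a^2*b + C*a*b^2 + D*b^3"
    "\<forall>a b. g a b = A'*a^3 + B'*a^2*b + C'*a*b^2 + D'*b^3"
    unfolding bcub_def by blast
  then show ?thesis unfolding bcub_def
    by (intro exI[of _ "A+A'"] exI[of _ "B+B'"] exI[of _ "C+C'"] exI[of _ "D+D'"]) (simp add: algebra_simps)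
qed

lemma bcub_diff: "bcub f \<Longrightarrow> bcub g \<Longrightarrow> bcub (\<lambda>a b. f a b - g a b)"
proof -
  assume "bcub f" "bcub g"
  then obtain A B C D A' B' C' D' where
    "\<forall>a b. f a b = A*a^3 + B*a^2*b + C*a*b^2 + D*b^3"
    "\<forall>a b. g a b = A'*a^3 + B'*a^2*b + C'*a*b^2 + D'*b^3"
    unfolding bcub_def by blast
  then show ?thesis unfolding bcub_def
    by (intro exI[of _ "A-A'"] exI[of _ "B-B'"] exI[of _ "C-C'"] exI[of _ "D-D'"]) (simp add: algebra_simps)
qed

lemma bcub_zero: "bcub (\<lambda>a b. 0)"
  unfolding bcub_def by (rule exI[of _ 0])+ simp

lemma bcub_sum: "finite S \<Longrightarrow> (\<And>s. s \<in> S \<Longrightarrow> bcub (f s)) \<Longrightarrow> bcub (\<lambda>a b. \<Sum>s\<in>S. f s a b)"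
proof (induction S rule: finite_induct)
  case empty then show ?case by (simp add: bcub_zero)
next
  case (insert x F)
  then show ?case by (simp add: bcub_add)
qed

lemma bcub_lin3: "bcub (\<lambda>a b. k * (a * u1 + b * v1) * (a * u2 + b * v2) * (a * u3 + b * v3))"
  unfolding bcub_def
  by (rule exI[of _ "k*u1*u2*u3"], rule exI[of _ "k*(u1*u2* v3 + u1* v2*u3 + v1*u2*u3)"],
      rule exI[of _ "k*(u1* v2* v3+v1*u2* v3+v1* v2*u3)"], rule exI[of _ "k* v1* v2* v3"])
     (simp add: algebra_simps power2_eq_square power3_eq_cube)

lemma nth4: fixes a b u0 u1 u2 u3 v0 v1 v2 v3 :: complex shows "i < 4 \<Longrightarrow> [a*u0+b* v0, a*u1+b* v1, a*u2+b* v2, a*u3+b* v3] ! i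
   = a* [u0,u1,u2,u3]!i + b* [v0,v1,v2,v3]!i"
  by (auto simp: less_Suc_eq numeral_eq_Suc)

lemma cubic_line:
  fixes a b u0 u1 u2 u3 v0 v1 v2 v3 :: complex
  assumes "cubic_form4 F"
  shows "bcub (\<lambda>a b. F (a*u0+b* v0) (a*u1+b* v1) (a*u2+b* v2) (a*u3+b* v3))"
proof -
  obtain c where c: "\<And>x0 x1 x2 x3. F x0 x1 x2 x3 = (\<Sum>i<4. \<Sum>j<4. \<Sum>k<4.
        c i j k * [x0,x1,x2,x3] ! i * [x0,x1,x2,x3] ! j * [x0,x1,x2,x3] ! k)"
    using assms unfolding cubic_form4_def by blast
  let ?u = "[u0,u1,u2,u3]" and ?v = "[v0,v1,v2,v3]"
  have "bcub (\<lambda>a b. \<Sum>i<4. \<Sum>j<4. \<Sum>k<4.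
        c i j k * (a* ?u!i + b* ?v!i) * (a* ?u!j + b* ?v!j) * (a* ?u!k + b* ?v!k))"
    by (intro bcub_sum finite_lessThan bcub_lin3)
  moreover have "\<And>a b. F (a*u0+b* v0) (a*u1+b* v1) (a*u2+b* v2) (a*u3+b* v3) =
     (\<Sum>i<4. \<Sum>j<4. \<Sum>k<4.
        c i j k * (a* ?u!i + b* ?v!i) * (a* ?u!j + b* ?v!j) * (a* ?u!k + b* ?v!k))"
    unfolding c by (intro sum.cong refl) (simp add: nth4)
  ultimately show ?thesis by simp
qed

lemma core:
  fixes y1 y2 l1 l2 m1 m2 :: complex
  assumes h: "\<forall>a b. (y1*a + y2*b)^3 = (l1*a + l2*b)^2 * (m1*a + m2*b)"
  shows "l1*y2 - l2*y1 = 0 \<and> m1*y2 - m2*y1 = 0 \<and> l1*m2 - l2*m1 = 0"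
proof -
  have 1: "l1*y2 - l2*y1 = 0"
  proof -
    have "(y1*(-l2) + y2*l1)^3 = (l1*(-l2) + l2*l1)^2 * (m1*(-l2) + m2*l1)" using h by blast
    then have "(l1*y2 - l2*y1)^3 = 0" by (simp add: algebra_simps)
    then show ?thesis by simp
  qed
  have 2: "m1*y2 - m2*y1 = 0"
  proof -
    have "(y1*(-m2) + y2*m1)^3 = (l1*(-m2) + l2*m1)^2 * (m1*(-m2) + m2*m1)" using h by blast
    then have "(m1*y2 - m2*y1)^3 = 0" by (simp add: algebra_simps)
    then show ?thesis by simp
  qed
  have 3: "l1*m2 - l2*m1 = 0"
  proof (rule ccontr)
    assume d: "l1*m2 - l2*m1 \<noteq> 0"
    have "y1 * (l1*m2 - l2*m1) = 0"
    proof -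
      have "y1 * (l1*m2 - l2*m1) = l1*(m2*y1) - m1*(l2*y1)" by (simp add: algebra_simps)
      also have "\<dots> = l1*(m1*y2) - m1*(l1*y2)" using 1 2 by (simp add: algebra_simps)
      finally show ?thesis by (simp add: algebra_simps)
    qed
    then have y1: "y1 = 0" using d by simp
    have "y2 * (l1*m2 - l2*m1) = 0"
    proof -
      have "y2 * (l1*m2 - l2*m1) = m2*(l1*y2) - l2*(m1*y2)" by (simp add: algebra_simps)
      also have "\<dots> = m2*(l2*y1) - l2*(m2*y1)" using 1 2 by (simp add: algebra_simps)
      finally show ?thesis by (simp add: algebra_simps)
    qed
    then have y2: "y2 = 0" using d by simp
    have "(y1*(m2-l2) + y2*(l1-m1))^3 = (l1*(m2-l2) + l2*(l1-m1))^2 * (m1*(m2-l2) + m2*(l1-m1))"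
      using h by blast
    moreover have "l1*(m2-l2) + l2*(l1-m1) = l1*m2 - l2*m1" "m1*(m2-l2) + m2*(l1-m1) = l1*m2 - l2*m1"
      by (simp_all add: algebra_simps)
    ultimately have "(l1*m2 - l2*m1)^2 * (l1*m2 - l2*m1) = 0" using y1 y2 by simp
    then show False using d by (metis mult_eq_0_iff power_eq_0_iff)
  qed
  show ?thesis using 1 2 3 by blast
qed

lemma prop_minors:
  assumes "p \<noteq> 0" "\<And>j k. p$j * q$k = p$k * q$j"
  shows "proportional p q"
proof -
  obtain k where k: "p$k \<noteq> 0" using assms(1) by (metis vec_eq_iff zero_index)
  have "q = (q$k / p$k) *s p"
  unfolding vec_eq_iff
  proof
    fix j
    have "p$j * q$k = p$k * q$j" using assms(2) by blast
    then show "q$j = ((q$k / p$k) *s p)$j" using k by (simp add: field_simps)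
  qed
  then show ?thesis unfolding proportional_def by blast
qed

definition Gc :: "cform4 \<Rightarrow> complex^6 \<Rightarrow> complex" where
  "Gc F v = (v$4)^3 - F (v$0) (v$1) (v$2) (v$3)"


lemma minors_from:
  fixes \<alpha> \<beta> \<gamma> \<delta> X Y :: complex
  assumes "\<alpha>*\<delta> - \<beta>*\<gamma> \<noteq> 0" "\<alpha>*X + \<beta>*Y = 0" "\<gamma>*X + \<delta>*Y = 0"
  shows "X = 0 \<and> Y = 0"
proof -
  have "X*(\<alpha>*\<delta> - \<beta>*\<gamma>) = \<delta>*(\<alpha>*X + \<beta>*Y) - \<beta>*(\<gamma>*X + \<delta>*Y)" by (simp add: algebra_simps)
  then have "X*(\<alpha>*\<delta> - \<beta>*\<gamma>) = 0" using assms by simp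
  moreover have "Y*(\<alpha>*\<delta> - \<beta>*\<gamma>) = \<alpha>*(\<gamma>*X + \<delta>*Y) - \<gamma>*(\<alpha>*X + \<beta>*Y)" by (simp add: algebra_simps)
  then have "Y*(\<alpha>*\<delta> - \<beta>*\<gamma>) = 0" using assms by simp
  ultimately show ?thesis using assms(1) by simp
qed

lemma nonvan_gen:
  fixes p q :: "complex^6" and s :: 6 and F :: cform4
  assumes tm: "tangent_mult2 f"
    and z: "\<forall>a b. (p$4*a + q$4*b)^3 = f (p$s*a + q$s*b) (p$3*a + q$3*b)"
    and zc: "\<And>j. j \<noteq> s \<Longrightarrow> j \<noteq> 3 \<Longrightarrow> j \<noteq> 4 \<Longrightarrow> p$j = 0 \<and> q$j = 0"
    and pn: "p \<noteq> 0"
  shows "proportional p q"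
proof -
  obtain \<alpha> \<beta> \<gamma> \<delta> where det: "\<alpha>*\<delta> - \<beta>*\<gamma> \<noteq> 0"
    and f: "\<forall>u v. f u v = (\<alpha>*u+\<beta> * v)^2*(\<gamma>*u+\<delta> * v)"
    using tm unfolding tangent_mult2_def by blast
  have h: "\<forall>a b. (p$4*a + q$4*b)^3 = ((\<alpha>*p$s+\<beta>*p$3)*a + (\<alpha>*q$s+\<beta>*q$3)*b)^2
          * ((\<gamma>*p$s+\<delta>*p$3)*a + (\<gamma>*q$s+\<delta>*q$3)*b)"
  proof (intro allI)
    fix a b
    have e1: "\<alpha>*(p$s*a + q$s*b) + \<beta>*(p$3*a + q$3*b) = (\<alpha>*p$s+\<beta>*p$3)*a + (\<alpha>*q$s+\<beta>*q$3)*b"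
      by (simp add: algebra_simps)
    have e2: "\<gamma>*(p$s*a + q$s*b) + \<delta>*(p$3*a + q$3*b) = (\<gamma>*p$s+\<delta>*p$3)*a + (\<gamma>*q$s+\<delta>*q$3)*b"
      by (simp add: algebra_simps)
    show "(p$4*a + q$4*b)^3 = ((\<alpha>*p$s+\<beta>*p$3)*a + (\<alpha>*q$s+\<beta>*q$3)*b)^2
          * ((\<gamma>*p$s+\<delta>*p$3)*a + (\<gamma>*q$s+\<delta>*q$3)*b)"
      using z f e1 e2 by metis
  qed
  note c = core[OF h]
  have X: "p$s*q$4 - q$s*p$4 = 0 \<and> p$3*q$4 - q$3*p$4 = 0"
  proof (rule minors_from[OF det])
    show "\<alpha>*(p$s*q$4 - q$s*p$4) + \<beta>*(p$3*q$4 - q$3*p$4) = 0"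
      using c by (simp add: algebra_simps)
    show "\<gamma>*(p$s*q$4 - q$s*p$4) + \<delta>*(p$3*q$4 - q$3*p$4) = 0"
      using c by (simp add: algebra_simps)
  qed
  have Z0: "(\<alpha>*\<delta> - \<beta>*\<gamma>) * (p$s*q$3 - p$3*q$s) = 0"
  proof -
    have "(\<alpha>*\<delta> - \<beta>*\<gamma>) * (p$s*q$3 - p$3*q$s) =
       (\<alpha>*p$s+\<beta>*p$3) * (\<gamma>*q$s+\<delta>*q$3) - (\<alpha>*q$s+\<beta>*q$3) * (\<gamma>*p$s+\<delta>*p$3)"
      by (simp add: algebra_simps)
    then show ?thesis using c by simp
  qed
  then have Z: "p$s*q$3 - p$3*q$s = 0" using det by simp
  show ?thesis
  proof (rule prop_minors[OF pn])
    fix j k :: 6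
    have A: "j = s \<or> j = 3 \<or> j = 4 \<or> (p$j = 0 \<and> q$j = 0)" using zc by blast
    have B: "k = s \<or> k = 3 \<or> k = 4 \<or> (p$k = 0 \<and> q$k = 0)" using zc by blast
    show "p$j * q$k = p$k * q$j"
      using A B X Z by (auto simp: algebra_simps)
  qed
qed


lemma p0_comp: "p0$0 = 0" "p0$1 = 0" "p0$2 = 0" "p0$3 = 0" "p0$4 = 0" "p0$5 = 1"
  by (simp_all add: p0_def)

lemma plane_G:
  assumes "i \<in> {1,2}" "in_Pi i p" "in_Pi i q"
  shows "Gform F t (plane_pt p q a b c) = Gc F (a *s p + b *s q)"
  using assms unfolding Gform_def Gc_def plane_pt_def in_Pi_def
  by (auto simp: p0_comp)

lemma Gc_nonvan:
  assumes "U0 F" "i \<in> {1,2}" "in_Pi i p" "in_Pi i q" "p \<noteq> 0" "\<not> proportional p q"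
  shows "\<exists>a b. Gc F (a *s p + b *s q) \<noteq> 0"
proof (rule ccontr)
  assume "\<not> ?thesis"
  then have z: "\<And>a b. Gc F (a *s p + b *s q) = 0" by blast
  have ex6: "\<And>j::6. j = 0 \<or> j = 1 \<or> j = 2 \<or> j = 3 \<or> j = 4 \<or> j = 5" by (rule exhaust_6)
  show False
  proof (cases "i = 1")
    case True
    have pq: "p$0 = 0" "p$1 = 0" "p$5 = 0" "q$0 = 0" "q$1 = 0" "q$5 = 0"
      using assms(3,4) True unfolding in_Pi_def by auto
    have "proportional p q"
    proof (rule nonvan_gen[where s = 2 and f = "\<lambda>u v. F 0 0 u v"])
      show "tangent_mult2 (\<lambda>u v. F 0 0 u v)" using assms(1) unfolding U0_def by blast
      show "\<forall>a b. (p$4*a + q$4*b)^3 = F 0 0 (p$2*a + q$2*b) (p$3*a + q$3*b)"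
      proof (intro allI)
        fix a b
        show "(p$4*a + q$4*b)^3 = F 0 0 (p$2*a + q$2*b) (p$3*a + q$3*b)"
          using z[of a b] pq unfolding Gc_def by (simp add: mult.commute)
      qed
      show "\<And>j. j \<noteq> 2 \<Longrightarrow> j \<noteq> 3 \<Longrightarrow> j \<noteq> 4 \<Longrightarrow> p$j = 0 \<and> q$j = 0"
        using ex6 pq by metis
      show "p \<noteq> 0" by fact
    qed
    then show False using assms(6) by blast
  next
    case False
    then have i2: "i = 2" using assms(2) by blast
    have pq: "p$0 = 0" "p$2 = 0" "p$5 = 0" "q$0 = 0" "q$2 = 0" "q$5 = 0"
      using assms(3,4) i2 unfolding in_Pi_def by auto
    have "proportional p q"
    proof (rule nonvan_gen[where s = 1 and f = "\<lambda>u v. F 0 u 0 v"])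
      show "tangent_mult2 (\<lambda>u v. F 0 u 0 v)" using assms(1) unfolding U0_def by blast
      show "\<forall>a b. (p$4*a + q$4*b)^3 = F 0 (p$1*a + q$1*b) 0 (p$3*a + q$3*b)"
      proof (intro allI)
        fix a b
        show "(p$4*a + q$4*b)^3 = F 0 (p$1*a + q$1*b) 0 (p$3*a + q$3*b)"
          using z[of a b] pq unfolding Gc_def by (simp add: mult.commute)
      qed
      show "\<And>j. j \<noteq> 1 \<Longrightarrow> j \<noteq> 3 \<Longrightarrow> j \<noteq> 4 \<Longrightarrow> p$j = 0 \<and> q$j = 0"
        using ex6 pq by metis
      show "p \<noteq> 0" by fact
    qed
    then show False using assms(6) by blast
  qed
qed

lemma bcub_cong: "bcub f \<Longrightarrow> (\<And>a b. g a b = f a b) \<Longrightarrow> bcub g"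
  unfolding bcub_def by simp

lemma bcub_Gc:
  assumes "cubic_form4 F"
  shows "bcub (\<lambda>a b. Gc F (a *s p + b *s q))"
proof (rule bcub_cong)
  show "bcub (\<lambda>a b. 1 * (a * p$4 + b * q$4) * (a * p$4 + b * q$4) * (a * p$4 + b * q$4)
     - F (a * p$0 + b * q$0) (a * p$1 + b * q$1) (a * p$2 + b * q$2) (a * p$3 + b * q$3))"
    by (intro bcub_diff bcub_lin3 cubic_line assms)
  fix a b
  show "Gc F (a *s p + b *s q) = 1 * (a * p$4 + b * q$4) * (a * p$4 + b * q$4) * (a * p$4 + b * q$4)
     - F (a * p$0 + b * q$0) (a * p$1 + b * q$1) (a * p$2 + b * q$2) (a * p$3 + b * q$3)"
    unfolding Gc_def by (simp add: power3_eq_cube)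
qed


lemma generic:
  fixes D2 :: "complex \<Rightarrow> complex \<Rightarrow> complex"
  assumes i: "i \<in> {1,2}" and ip: "in_Pi i p" and iq: "in_Pi i q" and pn: "p \<noteq> 0"
    and np: "\<not> proportional p q"
    and g: "\<And>a b. Gc F (a *s p + b *s q) = D2 a b * (n1*a + n2*b)"
    and n: "(n1, n2) \<noteq> (0, 0)"
    and d1: "D2 1 1 \<noteq> 0" and d2: "D2 1 2 \<noteq> 0"
  shows "(\<exists>L. residual_line F t p q (\<lambda>a b c. D2 a b) L) \<and>
         (\<exists>r. third_point F p q D2 r) \<and>
         (\<forall>L r. residual_line F t p q (\<lambda>a b c. D2 a b) L \<and> third_point F p q D2 r \<longrightarrow>
                   L = line_through p0 r \<and> Cpt F i r \<and> L \<in> Gamma F i)"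
proof (intro conjI allI impI)
  have GG: "\<And>a b c. Gform F t (plane_pt p q a b c) = Gc F (a *s p + b *s q)"
    by (rule plane_G[OF i ip iq])
  have lt: "\<And>a b. (let x = a *s p + b *s q in (x$4)^3 - F (x$0) (x$1) (x$2) (x$3)) = Gc F (a *s p + b *s q)"
    by (simp add: Gc_def Let_def)
  show "\<exists>L. residual_line F t p q (\<lambda>a b c. D2 a b) L"
    unfolding residual_line_def
    apply (rule exI, rule exI[of _ n1], rule exI[of _ n2], rule exI[of _ 0])
    using n by (auto simp: GG g)
  have "third_point F p q D2 ((-n2) *s p + n1 *s q)"
    unfolding third_point_def
  proof (rule exI[of _ "-n2"], rule exI[of _ n1], rule exI[of _ 1], intro conjI allI)
    show "(- n2, n1) \<noteq> (0, 0)" using n by auto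
    fix a b
    show "let x = a *s p + b *s q in x $ 4 ^ 3 - F (x $ 0) (x $ 1) (x $ 2) (x $ 3) =
             1 * D2 a b * (n1 * a - - n2 * b)"
      unfolding Let_def Gc_def[symmetric] g by (simp add: algebra_simps)
  qed simp_all
  then show "\<exists>r. third_point F p q D2 r" by blast
  fix L r
  assume "residual_line F t p q (\<lambda>a b c. D2 a b) L \<and> third_point F p q D2 r"
  then obtain m1 m2 m3 \<alpha> \<beta> \<kappa> where
    m: "\<And>a b c. Gform F t (plane_pt p q a b c) = D2 a b * (m1 * a + m2 * b + m3 * c)"
    and L: "L = {plane_pt p q a b c | a b c. m1 * a + m2 * b + m3 * c = 0}"
    and ab: "(\<alpha>,\<beta>) \<noteq> (0,0)" and k: "\<kappa> \<noteq> 0" and r: "r = \<alpha> *s p + \<beta> *s q"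
    and th: "\<And>a b. Gc F (a *s p + b *s q) = \<kappa> * D2 a b * (\<beta> * a - \<alpha> * b)"
    unfolding residual_line_def third_point_def Let_def Gc_def[symmetric] by blast
  have e: "\<And>a b c. D2 a b * (m1 * a + m2 * b + m3 * c) = \<kappa> * D2 a b * (\<beta> * a - \<alpha> * b)"
    using m th GG by metis
  have "D2 1 1 * (m1 + m2 + m3) = D2 1 1 * (\<kappa> * (\<beta> - \<alpha>))" using e[of 1 1 1] by (simp add: algebra_simps)
  then have s0: "m1 + m2 + m3 = \<kappa> * (\<beta> - \<alpha>)" using d1 by simp
  have "D2 1 1 * (m1 + m2) = D2 1 1 * (\<kappa> * (\<beta> - \<alpha>))" using e[of 1 1 0] by (simp add: algebra_simps)
  then have s1: "m1 + m2 = \<kappa> * (\<beta> - \<alpha>)" using d1 by simp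
  have m3: "m3 = 0" using s0 s1 by simp
  have "D2 1 2 * (m1 + 2*m2) = D2 1 2 * (\<kappa> * (\<beta> - 2*\<alpha>))" using e[of 1 2 0] by (simp add: algebra_simps)
  then have s2: "m1 + 2*m2 = \<kappa> * (\<beta> - 2*\<alpha>)" using d2 by simp
  have "m2 = (m1 + 2*m2) - (m1 + m2)" by simp
  also have "\<dots> = - \<kappa> * \<alpha>" unfolding s1 s2 by (simp add: algebra_simps)
  finally have m2: "m2 = - \<kappa> * \<alpha>" .
  have m1: "m1 = \<kappa> * \<beta>" using s1 m2 by (simp add: algebra_simps)
  have L2: "L = {plane_pt p q a b c | a b c. \<beta> * a = \<alpha> * b}"
    unfolding L m1 m2 m3 using k by (auto simp: algebra_simps)
  show "L = line_through p0 r"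
  proof
    show "L \<subseteq> line_through p0 r"
    proof
      fix x assume "x \<in> L"
      then obtain a b c where x: "x = plane_pt p q a b c" and abe: "\<beta> * a = \<alpha> * b"
        unfolding L2 by blast
      show "x \<in> line_through p0 r"
      proof (cases "\<alpha> = 0")
        case True
        then have "\<beta> \<noteq> 0" using ab by simp
        then have "x = c *s p0 + (b / \<beta>) *s r" using True abe unfolding x r plane_pt_def
          by (simp add: vec_eq_iff field_simps)
        then show ?thesis unfolding line_through_def by blast
      next
        case False
        then have "x = c *s p0 + (a / \<alpha>) *s r" using abe unfolding x r plane_pt_def
          by (simp add: vec_eq_iff field_simps)
        then show ?thesis unfolding line_through_def by blast
      qed
    qed
    show "line_through p0 r \<subseteq> L"
    proof
      fix x assume "x \<in> line_through p0 r"
      then obtain u v where x: "x = u *s p0 + v *s r" unfolding line_through_def by blast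
      have "x = plane_pt p q (v * \<alpha>) (v * \<beta>) u" unfolding x r plane_pt_def
        by (simp add: vec_eq_iff algebra_simps)
      moreover have "\<beta> * (v * \<alpha>) = \<alpha> * (v * \<beta>)" by simp
      ultimately show "x \<in> L" unfolding L2 by blast
    qed
  qed
  have rn: "r \<noteq> 0"
  proof
    assume r0: "r = 0"
    show False
    proof (cases "\<beta> = 0")
      case True
      then have "\<alpha> \<noteq> 0" using ab by simp
      moreover have "\<alpha> *s p = 0" using r0 True r by simp
      ultimately show False using pn by (simp add: vec_eq_iff)
    next
      case False
      have "q = (- \<alpha> / \<beta>) *s p" using r0 r False
        by (simp add: vec_eq_iff field_simps) (metis add.commute add_eq_0_iff mult.commute)
      then show False using np unfolding proportional_def by blast
    qed
  qed
  have "in_Pi i r" using ip iq unfolding r in_Pi_def by auto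
  moreover have "Gc F r = 0" using th[of \<alpha> \<beta>] r by simp
  ultimately show "Cpt F i r" using rn unfolding Cpt_def Gc_def by simp
  then show "L \<in> Gamma F i" unfolding Gamma_def using \<open>L = line_through p0 r\<close> by blast
qed


theorem lemma5p5:
  fixes F :: cform4 and t :: complex and i :: nat and p1 p2 :: "complex^6"
  assumes "U0 F"
    and "i \<in> {1, 2}"
    and "Cpt F i p1" and "Cpt F i p2"
  shows "(\<not> proportional p1 p2 \<longrightarrow>
            (\<exists>L. residual_line F t p1 p2 (\<lambda>a b c. a * b) L) \<and>
            (\<exists>r. third_point F p1 p2 (\<lambda>a b. a * b) r) \<and>
            (\<forall>L r. residual_line F t p1 p2 (\<lambda>a b c. a * b) L \<and>
                   third_point F p1 p2 (\<lambda>a b. a * b) r \<longrightarrow>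
                   L = line_through p0 r \<and> Cpt F i r \<and> L \<in> Gamma F i))
       \<and> (proportional p1 p2 \<longrightarrow> (\<forall>w. tangent_dir F i p1 w \<longrightarrow>
            (\<exists>L. residual_line F t p1 w (\<lambda>a b c. b^2) L) \<and>
            (\<exists>r. third_point F p1 w (\<lambda>a b. b^2) r) \<and>
            (\<forall>L r. residual_line F t p1 w (\<lambda>a b c. b^2) L \<and>
                   third_point F p1 w (\<lambda>a b. b^2) r \<longrightarrow>
                   L = line_through p0 r \<and> Cpt F i r \<and> L \<in> Gamma F i)))"
proof -
  have p1n: "p1 \<noteq> 0" and ip1: "in_Pi i p1" and G1: "Gc F p1 = 0"
    using assms(3) unfolding Cpt_def Gc_def by auto
  have ip2: "in_Pi i p2" and G2: "Gc F p2 = 0"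
    using assms(4) unfolding Cpt_def Gc_def by auto
  show ?thesis
  proof (rule conjI; intro impI allI)
    assume np: "\<not> proportional p1 p2"
    obtain A B C D where abcd: "\<And>a b. Gc F (a *s p1 + b *s p2) = A*a^3 + B*a^2*b + C*a*b^2 + D*b^3"
      using bcub_Gc[of F p1 p2] assms(1) unfolding U0_def bcub_def by blast
    have "A = 0" using abcd[of 1 0] G1 by simp
    moreover have "D = 0" using abcd[of 0 1] G2 by simp
    ultimately have g: "\<And>a b. Gc F (a *s p1 + b *s p2) = (a * b) * (B*a + C*b)"
      using abcd by (simp add: algebra_simps power2_eq_square power3_eq_cube)
    have n: "(B, C) \<noteq> (0, 0)"
    proof
      assume "(B, C) = (0, 0)"
      then have "\<And>a b. Gc F (a *s p1 + b *s p2) = 0" using g by simp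
      then show False using Gc_nonvan[OF assms(1,2) ip1 ip2 p1n np] by blast
    qed
    note R = generic[where ?D2.0 = "\<lambda>a b. a * b", OF assms(2) ip1 ip2 p1n np g n, simplified]
    show "(\<exists>L. residual_line F t p1 p2 (\<lambda>a b c. a * b) L) \<and>
     (\<exists>r. third_point F p1 p2 (\<lambda>a b. a * b) r) \<and>
     (\<forall>L r. residual_line F t p1 p2 (\<lambda>a b c. a * b) L \<and>
                   third_point F p1 p2 (\<lambda>a b. a * b) r \<longrightarrow>
                   L = line_through p0 r \<and> Cpt F i r \<and> L \<in> Gamma F i)" using R by blast
  next
  fix w
  assume "proportional p1 p2" "tangent_dir F i p1 w"
  then obtain c1 c2 where iw: "in_Pi i w" and np: "\<not> proportional p1 w"
    and g: "\<And>a b. Gc F (a *s p1 + b *s w) = b^2 * (c1 * a + c2 * b)"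
    unfolding tangent_dir_def Let_def Gc_def[symmetric] by blast
  have n: "(c1, c2) \<noteq> (0, 0)"
  proof
    assume "(c1, c2) = (0, 0)"
    then have "\<And>a b. Gc F (a *s p1 + b *s w) = 0" using g by simp
    then show False using Gc_nonvan[OF assms(1,2) ip1 iw p1n np] by blast
  qed
  note R = generic[where ?D2.0 = "\<lambda>a b. b^2", OF assms(2) ip1 iw p1n np g n, simplified]
  show "(\<exists>L. residual_line F t p1 w (\<lambda>a b c. b^2) L) \<and>
     (\<exists>r. third_point F p1 w (\<lambda>a b. b^2) r) \<and>
     (\<forall>L r. residual_line F t p1 w (\<lambda>a b c. b^2) L \<and>
                   third_point F p1 w (\<lambda>a b. b^2) r \<longrightarrow>
                   L = line_through p0 r \<and> Cpt F i r \<and> L \<in> Gamma F i)" using R by blast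
  qed
qed

end
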